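(* Let $1\le k<n$ and let $T\colon\mathbb{H}_n\to\mathbb{H}_n$ be a bijective $\mathbb{R}$-linear map preserving parallel pairs with respect to $w_k$. Suppose $A\in\mathbb{H}_n$ attains its $k$-numerical radius at a unique rank-$k$ orthogonal projection $Q$. Then $X=T^{-1}(A)$ either attains its $k$-numerical radius at a unique rank-$k$ orthogonal projection $P$, or $n=2k$ and the rank-$k$ orthogonal projections at which $X$ attains its $k$-numerical radius are exactly $P$ and $I-P$ for some $P$.
   Context: $\mathbb{H}_n$ is the real space of $n\times n$ Hermitian matrices. $w_k(A)=\max\{|\operatorname{tr}(AP)|: P=P^*=P^2,\operatorname{tr}P=k\}$; $A$ attains its $k$-numerical radius at a rank-$k$ orthogonal projection $P$ if $|\operatorname{tr}(AP)|=w_k(A)$. For $A,B\in\mathbb{H}_n$, $A\parallel B$ means $w_k(A+\mu B)=w_k(A)+w_k(B)$ for some $\mu\in\{1,-1\}$; $T$ preserves parallel pairs if $T(A)\parallel T(B)$ whenever $A\parallel B$. *)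

theory Defs
  imports "HOL-Analysis.Analysis"
begin

definition cadj :: "complex^'n^'n \<Rightarrow> complex^'n^'n" where
  "cadj A = (\<chi> i j. cnj (A $ j $ i))"

text \<open>The set H_n of Hermitian matrices (index type 'n, n = CARD('n)).\<close>
definition herm :: "(complex^'n^'n) set" where
  "herm = {A. cadj A = A}"

definition rank_proj :: "nat \<Rightarrow> (complex^'n^'n) set" where
  "rank_proj k = {P. cadj P = P \<and> P ** P = P \<and> trace P = of_nat k}"

definition wk :: "nat \<Rightarrow> complex^'n^'n \<Rightarrow> real" where
  "wk k A = Sup {cmod (trace (A ** P)) | P. P \<in> rank_proj k}"

definition attain_set :: "nat \<Rightarrow> complex^'n^'n \<Rightarrow> (complex^'n^'n) set" where
  "attain_set k A = {P \<in> rank_proj k. cmod (trace (A ** P)) = wk k A}"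

definition wk_parallel :: "nat \<Rightarrow> complex^'n^'n \<Rightarrow> complex^'n^'n \<Rightarrow> bool" where
  "wk_parallel k A B \<longleftrightarrow> (\<exists>\<mu>::real\<in>{1, -1}. wk k (A + \<mu> *\<^sub>R B) = wk k A + wk k B)"

end

theory Submission
  imports Defs
begin



lemma cadj_cadj[simp]: "cadj (cadj A) = A"
  by (simp add: cadj_def vec_eq_iff)

lemma cadj_add[simp]: "cadj (A + B) = cadj A + cadj B"
  by (simp add: cadj_def vec_eq_iff)

lemma cadj_diff[simp]: "cadj (A - B) = cadj A - cadj B"
  by (simp add: cadj_def vec_eq_iff)

lemma cadj_scaleR[simp]: "cadj (c *\<^sub>R A) = c *\<^sub>R cadj A"
  by (simp add: cadj_def vec_eq_iff scaleR_conv_of_real scaleR_vec_def)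

lemma cadj_mat[simp]: "cadj (mat (of_real c)) = mat (of_real c)"
  by (simp add: cadj_def vec_eq_iff mat_def)

lemma cadj_one[simp]: "cadj (mat 1) = mat 1"
  by (simp add: cadj_def vec_eq_iff mat_def)

lemma cadj_zero[simp]: "cadj 0 = 0"
  by (simp add: cadj_def vec_eq_iff)

lemma cadj_mult: "cadj (A ** B) = cadj B ** cadj A"
  by (simp add: cadj_def vec_eq_iff matrix_matrix_mult_def mult.commute)

lemma trace_cadj: "trace (cadj A) = cnj (trace A)"
  by (simp add: cadj_def trace_def)

lemma herm_iff: "A \<in> herm \<longleftrightarrow> cadj A = A"
  by (simp add: herm_def)

lemma trace_herm_real:
  assumes "cadj X = X" "cadj R = R"
  shows "trace (X ** R) \<in> \<real>"
proof -
  have "cnj (trace (X ** R)) = trace (X ** R)"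
    by (simp add: trace_cadj[symmetric] cadj_mult assms trace_mul_sym[of R X])
  then show ?thesis using Reals_cnj_iff by blast
qed

lemma trace_scaleR: "trace (c *\<^sub>R A) = c *\<^sub>R trace A"
  by (simp add: trace_def scaleR_sum_right)

lemma mmult_scaleR_left: "(c *\<^sub>R A) ** B = c *\<^sub>R (A ** (B::complex^'n^'n))"
  unfolding vec_eq_iff matrix_matrix_mult_def
  by (simp only: vector_scaleR_component) (simp add: scaleR_conv_of_real sum_distrib_left mult_ac)

lemma mmult_scaleR_right: "A ** (c *\<^sub>R B) = c *\<^sub>R (A ** (B::complex^'n^'n))"
  unfolding vec_eq_iff matrix_matrix_mult_def
  by (simp only: vector_scaleR_component) (simp add: scaleR_conv_of_real sum_distrib_left mult_ac)

lemma mult_diff_left: "(A - B) ** (C::'a::ring_1^'n^'n) = A ** C - B ** C"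
  by (simp add: matrix_matrix_mult_def vec_eq_iff sum_subtractf left_diff_distrib)

lemma mult_diff_right: "(C::'a::ring_1^'n^'n) ** (A - B) = C ** A - C ** B"
  by (simp add: matrix_matrix_mult_def vec_eq_iff sum_subtractf right_diff_distrib)

lemma herm_subspace: "subspace (herm :: (complex^'n^'n) set)"
  unfolding subspace_def herm_def by auto

definition ip :: "complex^'n \<Rightarrow> complex^'n \<Rightarrow> complex" where
  "ip x y = (\<Sum>i\<in>UNIV. cnj (x$i) * y$i)"

definition outer :: "complex^'n \<Rightarrow> complex^'n \<Rightarrow> complex^'n^'n" where
  "outer u v = (\<chi> a b. u$a * cnj (v$b))"

lemma cnj_ip: "cnj (ip x y) = ip y x"
  by (simp add: ip_def mult.commute)

lemma ip_add_left: "ip (x + y) z = ip x z + ip y z"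
  by (simp add: ip_def distrib_right sum.distrib)
lemma ip_add_right: "ip z (x + y) = ip z x + ip z y"
  by (simp add: ip_def distrib_left sum.distrib)
lemma ip_diff_left: "ip (x - y) z = ip x z - ip y z"
  by (simp add: ip_def left_diff_distrib sum_subtractf)
lemma ip_diff_right: "ip z (x - y) = ip z x - ip z y"
  by (simp add: ip_def right_diff_distrib sum_subtractf)
lemma ip_smult_left: "ip (c *s x) y = cnj c * ip x y"
  by (simp add: ip_def sum_distrib_left mult_ac)
lemma ip_smult_right: "ip x (c *s y) = c * ip x y"
  by (simp add: ip_def sum_distrib_left mult_ac)
lemma ip_zero_left[simp]: "ip 0 y = 0" by (simp add: ip_def)
lemma ip_zero_right[simp]: "ip y 0 = 0" by (simp add: ip_def)

lemma ip_self: "ip x x = of_real (\<Sum>i\<in>UNIV. (cmod (x$i))\<^sup>2)"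
proof -
  have "\<And>i. cnj (x$i) * x$i = of_real ((cmod (x$i))\<^sup>2)"
    by (simp add: complex_norm_square mult.commute del: of_real_power)
  then show ?thesis unfolding ip_def of_real_sum by simp
qed

lemma ip_self_real: "ip x x \<in> \<real>"
  by (simp add: ip_self)

lemma ip_self_nonneg: "Re (ip x x) \<ge> 0"
  by (simp add: ip_self sum_nonneg)

lemma ip_self_eq0: "ip x x = 0 \<longleftrightarrow> x = 0"
proof
  assume "ip x x = 0"
  then have "(\<Sum>i\<in>UNIV. (cmod (x$i))\<^sup>2) = 0" unfolding ip_self of_real_eq_0_iff .
  then have "\<forall>i\<in>UNIV. (cmod (x$i))\<^sup>2 = 0"
    by (subst sum_nonneg_eq_0_iff[symmetric]) auto
  then show "x = 0" by (simp add: vec_eq_iff)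
qed simp

lemma ip_mv: "ip x (M *v y) = ip (cadj M *v x) y"
  unfolding ip_def matrix_vector_mult_def cadj_def
  by (simp add: sum_distrib_left sum_distrib_right mult_ac) (rule sum.swap)

lemma ip_mv_herm: "cadj M = M \<Longrightarrow> ip x (M *v y) = ip (M *v x) y"
  by (metis ip_mv)

lemma cadj_outer[simp]: "cadj (outer u v) = outer v u"
  by (simp add: cadj_def outer_def vec_eq_iff)

lemma trace_outer: "trace (outer u v) = ip v u"
  by (simp add: trace_def outer_def ip_def mult.commute)

lemma outer_mult_outer: "outer u v ** outer x y = outer (ip v x *s u) y"
  by (simp add: outer_def ip_def matrix_matrix_mult_def vec_eq_iff sum_distrib_left sum_distrib_right mult_ac)

lemma mult_outer: "M ** outer u v = outer (M *v u) v"
  by (simp add: outer_def matrix_vector_mult_def matrix_matrix_mult_def vec_eq_iff sum_distrib_right sum_distrib_left mult_ac)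

lemma outer_mult: "outer u v ** M = outer u (cadj M *v v)"
  by (simp add: outer_def cadj_def matrix_vector_mult_def matrix_matrix_mult_def vec_eq_iff sum_distrib_left mult_ac)

lemma outer_mv: "outer u v *v x = ip v x *s u"
  by (simp add: outer_def ip_def matrix_vector_mult_def vec_eq_iff sum_distrib_right sum_distrib_left mult_ac)

lemma trace_mult_outer: "trace (M ** outer u v) = ip v (M *v u)"
  by (simp add: mult_outer trace_outer)

lemma outer_add_left: "outer (x + y) v = outer x v + outer y v"
  by (simp add: outer_def vec_eq_iff distrib_right)
lemma outer_add_right: "outer u (x + y) = outer u x + outer u y"
  by (simp add: outer_def vec_eq_iff distrib_left)
lemma outer_smult_left: "outer (c *s x) v = (\<chi> a b. c * outer x v $ a $ b)"
  by (simp add: outer_def vec_eq_iff)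
lemma outer_zero_left[simp]: "outer 0 v = 0" by (simp add: outer_def vec_eq_iff)
lemma outer_zero_right[simp]: "outer u 0 = 0" by (simp add: outer_def vec_eq_iff)

lemma sum_mmult_left: "finite I \<Longrightarrow> (\<Sum>i\<in>I. F i) ** (B::'a::comm_ring_1^'n^'n) = (\<Sum>i\<in>I. F i ** B)"
  by (induction I rule: finite_induct) (auto simp: vec_eq_iff matrix_matrix_mult_def sum.distrib distrib_right)

lemma sum_mmult_right: "finite I \<Longrightarrow> (B::'a::comm_ring_1^'n^'n) ** (\<Sum>i\<in>I. F i) = (\<Sum>i\<in>I. B ** F i)"
  by (induction I rule: finite_induct) (auto simp: matrix_add_ldistrib)

lemma sum_mv: "finite I \<Longrightarrow> (\<Sum>i\<in>I. F i) *v (x::'a::comm_ring_1^'n) = (\<Sum>i\<in>I. F i *v x)"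
  by (induction I rule: finite_induct) (auto simp: matrix_vector_mult_add_rdistrib)

lemma cadj_sum: "finite I \<Longrightarrow> cadj (\<Sum>i\<in>I. F i) = (\<Sum>i\<in>I. cadj (F i))"
  by (induction I rule: finite_induct) auto

lemma trace_sum: "finite I \<Longrightarrow> trace (\<Sum>i\<in>I. F i) = (\<Sum>i\<in>I. trace (F i :: 'a::comm_semiring_1^'n^'n))"
  by (induction I rule: finite_induct) (auto simp: trace_add trace_0[unfolded mat_0])



lemma cont_entry: "continuous_on S (\<lambda>P::complex^'n^'n. P$i$j)"
proof -
  have "bounded_linear (\<lambda>P::complex^'n^'n. P$i$j)"
    using bounded_linear_compose[OF bounded_linear_vec_nth[of j] bounded_linear_vec_nth[of i]] by simp
  then show ?thesis by (rule linear_continuous_on)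
qed

lemma cont_mmult: "continuous_on S (\<lambda>P::complex^'n^'n. (f P ** g P :: complex^'m^'m))"
  if "\<And>i j. continuous_on S (\<lambda>P. f P $ i $ j)" "\<And>i j. continuous_on S (\<lambda>P. g P $ i $ j)"
  unfolding matrix_matrix_mult_def
  by (intro continuous_on_vec_lambda continuous_intros that)

lemma cont_mmult_entry: "continuous_on S (\<lambda>P::complex^'n^'n. (f P ** g P :: complex^'m^'m) $ a $ b)"
  if "\<And>i j. continuous_on S (\<lambda>P. f P $ i $ j)" "\<And>i j. continuous_on S (\<lambda>P. g P $ i $ j)"
  unfolding matrix_matrix_mult_def
  by (simp, intro continuous_intros that)

lemma cont_trace: "continuous_on S (\<lambda>P::complex^'n^'n. trace (f P :: complex^'m^'m))"
  if "\<And>i j. continuous_on S (\<lambda>P. f P $ i $ j)"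
  unfolding trace_def by (intro continuous_intros that)

lemma cont_cadj: "continuous_on S (\<lambda>P::complex^'n^'n. cadj P)"
  unfolding cadj_def by (intro continuous_on_vec_lambda continuous_on_cnj cont_entry)

lemma closed_rank_proj: "closed (rank_proj k :: (complex^'n^'n) set)"
proof -
  have "rank_proj k = {P::complex^'n^'n. cadj P = P} \<inter> {P. P ** P = P} \<inter> {P. trace P = of_nat k}"
    by (auto simp: rank_proj_def)
  moreover have "closed {P::complex^'n^'n. cadj P = P}"
    by (intro closed_Collect_eq continuous_on_id cont_cadj) 
  moreover have "closed {P::complex^'n^'n. P ** P = P}"
    by (intro closed_Collect_eq continuous_on_id cont_mmult cont_entry)
  moreover have "closed {P::complex^'n^'n. trace P = of_nat k}"
    by (intro closed_Collect_eq continuous_on_const cont_trace cont_entry)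
  ultimately show ?thesis by (simp add: closed_Int)
qed

lemma norm_sq_mat: "(norm (M::complex^'n^'n))\<^sup>2 = (\<Sum>i\<in>UNIV. \<Sum>j\<in>UNIV. (cmod (M$i$j))\<^sup>2)"
  unfolding norm_vec_def L2_set_def
  by (simp add: sum_nonneg)

lemma trace_adj_self: "trace (cadj M ** M) = of_real ((norm (M::complex^'n^'n))\<^sup>2)"
proof -
  have "trace (cadj M ** M) = (\<Sum>i\<in>UNIV. \<Sum>j\<in>UNIV. cnj (M$j$i) * M$j$i)"
    by (simp add: trace_def matrix_matrix_mult_def cadj_def)
  also have "\<dots> = (\<Sum>j\<in>UNIV. \<Sum>i\<in>UNIV. cnj (M$j$i) * M$j$i)"
    by (rule sum.swap)
  also have "\<dots> = (\<Sum>j\<in>UNIV. \<Sum>i\<in>UNIV. of_real ((cmod (M$j$i))\<^sup>2))"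
    by (simp add: complex_norm_square mult.commute del: of_real_power)
  also have "\<dots> = of_real ((norm M)\<^sup>2)"
    by (simp add: norm_sq_mat del: of_real_power)
  finally show ?thesis .
qed

lemma norm_rank_proj: "P \<in> rank_proj k \<Longrightarrow> (norm (P::complex^'n^'n))\<^sup>2 = real k"
proof -
  assume "P \<in> rank_proj k"
  then have "trace (cadj P ** P) = of_nat k" by (auto simp: rank_proj_def)
  then have "complex_of_real ((norm P)\<^sup>2) = complex_of_real (real k)"
    by (simp only: trace_adj_self of_real_of_nat_eq)
  then show ?thesis by (simp only: of_real_eq_iff)
qed

lemma compact_rank_proj: "compact (rank_proj k :: (complex^'n^'n) set)"
proof -
  have "bounded (rank_proj k :: (complex^'n^'n) set)"
    unfolding bounded_iff
  proof (intro exI ballI)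
    fix P :: "complex^'n^'n" assume "P \<in> rank_proj k"
    then have "(norm P)\<^sup>2 = real k" by (rule norm_rank_proj)
    then show "norm P \<le> real k + 1"
      by (smt (verit, ccfv_threshold) norm_ge_zero power2_eq_square mult_le_cancel_left1 of_nat_0_le_iff)
  qed
  then show ?thesis using closed_rank_proj compact_eq_bounded_closed by blast
qed

definition diagP :: "'n set \<Rightarrow> complex^'n^'n" where
  "diagP S = (\<chi> i j. if i = j \<and> i \<in> S then 1 else 0)"

lemma diagP_rank_proj: "card S = k \<Longrightarrow> diagP (S::'n::finite set) \<in> rank_proj k"
  unfolding rank_proj_def
proof (intro CollectI conjI)
  show "cadj (diagP S) = diagP S" by (auto simp: cadj_def diagP_def vec_eq_iff)
  show "diagP S ** diagP S = diagP S"
  proof -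
    have "\<And>i j. (\<Sum>l\<in>UNIV. (if i = l \<and> i \<in> S then 1 else 0) * (if l = j \<and> l \<in> S then 1 else (0::complex)))
        = (\<Sum>l\<in>UNIV. if l = i then (if i = j \<and> i \<in> S then 1 else 0) else 0)"
      by (rule sum.cong) auto
    then show ?thesis by (simp add: matrix_matrix_mult_def diagP_def vec_eq_iff)
  qed
  assume "card S = k"
  then show "trace (diagP S) = of_nat k"
    by (simp add: trace_def diagP_def sum.If_cases)
qed

lemma rank_proj_ne: "k \<le> CARD('n::finite) \<Longrightarrow> rank_proj k \<noteq> ({} :: (complex^'n^'n) set)"
  by (metis diagP_rank_proj empty_iff obtain_subset_with_card_n)

lemma cont_trace_mult: "continuous_on S (\<lambda>P::complex^'n^'n. cmod (trace (X ** P)))"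
  by (intro continuous_on_norm cont_trace cont_mmult_entry continuous_on_const cont_entry)

context fixes k :: nat assumes kle: "k \<le> CARD('n::finite)"
begin

lemma attain_exists: "\<exists>P. P \<in> attain_set k (X::complex^'n^'n)"
proof -
  obtain P where P: "P \<in> rank_proj k" "\<forall>R\<in>rank_proj k. cmod (trace (X ** R)) \<le> cmod (trace (X ** P))"
    using continuous_attains_sup[OF compact_rank_proj rank_proj_ne[OF kle] cont_trace_mult] by blast
  have "wk k X = cmod (trace (X ** P))"
    unfolding wk_def
    by (rule cSup_eq_maximum) (use P in auto)
  then show ?thesis using P unfolding attain_set_def by auto
qed

lemma wk_upper: "R \<in> rank_proj k \<Longrightarrow> cmod (trace ((X::complex^'n^'n) ** R)) \<le> wk k X"
proof -
  assume R: "R \<in> rank_proj k"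
  obtain P where "P \<in> attain_set k X" using attain_exists by blast
  then have P: "P \<in> rank_proj k" "cmod (trace (X ** P)) = wk k X" by (auto simp: attain_set_def)
  have "bdd_above {cmod (trace (X ** P)) | P. P \<in> rank_proj k}"
  proof -
    obtain Q where Q: "Q \<in> rank_proj k" "\<forall>R\<in>rank_proj k. cmod (trace (X ** R)) \<le> cmod (trace (X ** Q))"
      using continuous_attains_sup[OF compact_rank_proj rank_proj_ne[OF kle] cont_trace_mult] by blast
    then show ?thesis by (auto intro!: bdd_aboveI)
  qed
  moreover have "cmod (trace (X ** R)) \<in> {cmod (trace (X ** P)) | P. P \<in> rank_proj k}" using R by auto
  ultimately show ?thesis unfolding wk_def by (intro cSup_upper)
qed

lemma wk_least: "(\<And>R. R \<in> rank_proj k \<Longrightarrow> cmod (trace ((X::complex^'n^'n) ** R)) \<le> c) \<Longrightarrow> wk k X \<le> c"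
  unfolding wk_def using rank_proj_ne[OF kle] by (intro cSup_least) auto

lemma attain_iff: "P \<in> attain_set k X \<longleftrightarrow> P \<in> rank_proj k \<and> (\<forall>R\<in>rank_proj k. cmod (trace ((X::complex^'n^'n) ** R)) \<le> cmod (trace (X ** P)))"
proof
  assume "P \<in> attain_set k X" then show "P \<in> rank_proj k \<and> (\<forall>R\<in>rank_proj k. cmod (trace (X ** R)) \<le> cmod (trace (X ** P)))"
    using wk_upper by (auto simp: attain_set_def)
next
  assume a: "P \<in> rank_proj k \<and> (\<forall>R\<in>rank_proj k. cmod (trace (X ** R)) \<le> cmod (trace (X ** P)))"
  then have "wk k X \<le> cmod (trace (X ** P))" by (intro wk_least) auto
  with a wk_upper[of P X] show "P \<in> attain_set k X" by (auto simp: attain_set_def)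
qed

end


lemma add_mmult: "(A + B) ** (C::'a::semiring_1^'n^'n) = A ** C + B ** C"
  by (simp add: matrix_matrix_mult_def vec_eq_iff sum.distrib distrib_right)

lemma trace_lin: "trace ((X + \<mu> *\<^sub>R Y) ** (R::complex^'n^'n)) = trace (X ** R) + \<mu> *\<^sub>R trace (Y ** R)"
  by (simp add: add_mmult mmult_scaleR_left trace_add trace_scaleR)

lemma par_common:
  assumes kle: "k \<le> CARD('n::finite)" and p: "wk_parallel k (X::complex^'n^'n) Y"
  shows "\<exists>R. R \<in> attain_set k X \<and> R \<in> attain_set k Y"
proof -
  obtain \<mu> :: real where mu: "\<mu> \<in> {1,-1}" "wk k (X + \<mu> *\<^sub>R Y) = wk k X + wk k Y"
    using p unfolding wk_parallel_def by blast
  obtain R where R: "R \<in> attain_set k (X + \<mu> *\<^sub>R Y)" using attain_exists[OF kle] by blast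
  then have Rr: "R \<in> rank_proj k" and eq: "cmod (trace (X ** R) + \<mu> *\<^sub>R trace (Y ** R)) = wk k X + wk k Y"
    using mu by (auto simp: attain_set_def trace_lin)
  have "cmod (\<mu> *\<^sub>R trace (Y ** R)) = cmod (trace (Y ** R))" using mu by auto
  then have "cmod (trace (X ** R) + \<mu> *\<^sub>R trace (Y ** R)) \<le> cmod (trace (X ** R)) + cmod (trace (Y ** R))"
    by (metis norm_triangle_ineq)
  moreover have "cmod (trace (X ** R)) \<le> wk k X" "cmod (trace (Y ** R)) \<le> wk k Y"
    using wk_upper[OF kle Rr] by auto
  ultimately have "cmod (trace (X ** R)) = wk k X" "cmod (trace (Y ** R)) = wk k Y"
    using eq by linarith+
  then show ?thesis using Rr by (auto simp: attain_set_def)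
qed

lemma common_par:
  assumes kle: "k \<le> CARD('n::finite)" and X: "cadj X = X" and Y: "cadj Y = (Y::complex^'n^'n)"
    and RX: "R \<in> attain_set k X" and RY: "R \<in> attain_set k Y"
  shows "wk_parallel k X Y"
proof -
  have Rr: "R \<in> rank_proj k" and Rh: "cadj R = R" using RX by (auto simp: attain_set_def rank_proj_def)
  define a where "a = trace (X ** R)"
  define b where "b = trace (Y ** R)"
  have ar: "a \<in> \<real>" unfolding a_def using trace_herm_real[OF X Rh] .
  have br: "b \<in> \<real>" unfolding b_def using trace_herm_real[OF Y Rh] .
  have wa: "cmod a = wk k X" using RX by (auto simp: attain_set_def a_def)
  have wb: "cmod b = wk k Y" using RY by (auto simp: attain_set_def b_def)
  define \<mu> :: real where "\<mu> = (if Re a * Re b \<ge> 0 then 1 else -1)"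
  have mu: "\<mu> \<in> {1, -1}" by (auto simp: \<mu>_def)
  have "cmod (a + \<mu> *\<^sub>R b) = cmod a + cmod b"
  proof -
    have "a = of_real (Re a)" "b = of_real (Re b)" using ar br by (auto simp: complex_eq_iff)
    then have "cmod (a + \<mu> *\<^sub>R b) = \<bar>Re a + \<mu> * Re b\<bar>" "cmod a = \<bar>Re a\<bar>" "cmod b = \<bar>Re b\<bar>"
      by (metis norm_of_real of_real_add scaleR_conv_of_real of_real_mult)+
    moreover have "\<bar>Re a + \<mu> * Re b\<bar> = \<bar>Re a\<bar> + \<bar>Re b\<bar>"
      unfolding \<mu>_def by (auto simp: abs_if zero_le_mult_iff mult_le_0_iff)
    ultimately show ?thesis by simp
  qed
  then have ge: "wk k X + wk k Y \<le> wk k (X + \<mu> *\<^sub>R Y)"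
    using wk_upper[OF kle Rr, of "X + \<mu> *\<^sub>R Y"] wa wb by (simp add: trace_lin a_def b_def)
  have le: "wk k (X + \<mu> *\<^sub>R Y) \<le> wk k X + wk k Y"
  proof (rule wk_least[OF kle])
    fix S :: "complex^'n^'n" assume S: "S \<in> rank_proj k"
    have "cmod (trace ((X + \<mu> *\<^sub>R Y) ** S)) \<le> cmod (trace (X ** S)) + cmod (\<mu> *\<^sub>R trace (Y ** S))"
      unfolding trace_lin by (rule norm_triangle_ineq)
    also have "\<dots> = cmod (trace (X ** S)) + cmod (trace (Y ** S))" using mu by auto
    also have "\<dots> \<le> wk k X + wk k Y" using wk_upper[OF kle S] by (simp add: add_mono)
    finally show "cmod (trace ((X + \<mu> *\<^sub>R Y) ** S)) \<le> wk k X + wk k Y" .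
  qed
  show ?thesis unfolding wk_parallel_def using mu ge le by (intro bexI[of _ \<mu>]) auto
qed



lemma mv_smult: "M *v (c *s x) = c *s (M *v (x::complex^'n))"
  by (simp add: matrix_vector_mult_def vec_eq_iff sum_distrib_left mult_ac)

lemma outer_smult_right: "outer x (c *s y) = outer (cnj c *s x) y"
  by (simp add: outer_def vec_eq_iff mult_ac)

lemma outer_smult_left': "outer (c *s x) y = outer x (cnj c *s y)"
  by (simp add: outer_def vec_eq_iff mult_ac)

lemma ip_axis: "ip (H *v axis a 1) (B *v axis b 1) = (cadj H ** B)$a$b"
  by (simp add: ip_def matrix_vector_mult_def axis_def cadj_def matrix_matrix_mult_def
      if_distrib[of "\<lambda>x. _ * x"] cong: if_cong)

lemma ip_outer_expand:
  fixes u v :: "complex^'n"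
  shows "ip (c *s u + s *s v) (Z *v (c *s u + s *s v)) =
     cnj c * c * ip u (Z *v u) + cnj c * s * ip u (Z *v v) + cnj s * c * ip v (Z *v u) + cnj s * s * ip v (Z *v v)"
  by (simp add: matrix_vector_right_distrib mv_smult ip_add_left ip_add_right ip_smult_left ip_smult_right algebra_simps)

lemma ip_orth: "cadj Q = Q \<Longrightarrow> Q *v u = u \<Longrightarrow> Q *v v = 0 \<Longrightarrow> ip u v = 0"
  by (metis ip_mv_herm ip_zero_right)

lemma rot_lemma:
  fixes Z Q :: "complex^'n^'n" and u v :: "complex^'n"
  assumes Zh: "cadj Z = Z" and Qh: "cadj Q = Q" and Qi: "Q ** Q = Q" and Qt: "trace Q = of_nat k"
    and mx: "\<forall>R\<in>rank_proj k. Re (trace (Z ** R)) \<le> Re (trace (Z ** Q))"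
    and u: "Q *v u = u" "ip u u = 1" and v: "Q *v v = 0" "ip v v = 1"
  shows "ip u (Z *v v) = 0"
proof (rule ccontr)
  define \<beta> where "\<beta> = ip u (Z *v v)"
  assume "ip u (Z *v v) \<noteq> 0"
  then have b0: "\<beta> \<noteq> 0" by (simp add: \<beta>_def)
  define nb where "nb = cmod \<beta>"
  have nb0: "nb > 0" using b0 by (simp add: nb_def)
  define a where "a = Re (ip u (Z *v u))"
  define d where "d = Re (ip v (Z *v v))"
  have ar: "ip u (Z *v u) = of_real a"
  proof -
    have "cnj (ip u (Z *v u)) = ip u (Z *v u)"
      by (metis cnj_ip ip_mv_herm[OF Zh])
    then show ?thesis unfolding a_def by (metis Reals_cnj_iff Re_complex_of_real Reals_cases)
  qed
  have dr: "ip v (Z *v v) = of_real d"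
  proof -
    have "cnj (ip v (Z *v v)) = ip v (Z *v v)"
      by (metis cnj_ip ip_mv_herm[OF Zh])
    then show ?thesis unfolding d_def by (metis Reals_cnj_iff Re_complex_of_real Reals_cases)
  qed
  have vu: "ip v (Z *v u) = cnj \<beta>"
    unfolding \<beta>_def by (metis cnj_ip ip_mv_herm[OF Zh])
  have uv: "ip u v = 0" using ip_orth[OF Qh u(1) v(1)] .
  define t where "t = min (1/2) (nb / (2 * (\<bar>a\<bar> + \<bar>d\<bar> + 1)))"
  have t0: "t > 0" using nb0 by (simp add: t_def)
  have t1: "t \<le> 1/2" unfolding t_def by (rule min.cobounded1)
  have t2: "t * (\<bar>a\<bar> + \<bar>d\<bar>) < nb"
  proof -
    have "t * (\<bar>a\<bar> + \<bar>d\<bar>) \<le> nb / (2 * (\<bar>a\<bar> + \<bar>d\<bar> + 1)) * (\<bar>a\<bar> + \<bar>d\<bar>)"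
      by (rule mult_right_mono) (auto simp: t_def)
    also have "\<dots> < nb" using nb0 by (simp add: field_simps) (smt (verit) abs_ge_zero mult_nonneg_nonneg)
    finally show ?thesis .
  qed
  define c0 where "c0 = sqrt (1 - t\<^sup>2)"
  have "t\<^sup>2 \<le> 1" using t0 t1 by (intro power_le_one) auto
  then have c0sq: "c0\<^sup>2 = 1 - t\<^sup>2" unfolding c0_def by (simp add: real_sqrt_pow2)
  have c0h: "c0 \<ge> 1/2"
  proof -
    have "t\<^sup>2 \<le> (1/2)\<^sup>2" using t1 t0 by (intro power_mono) auto
    then have "1/4 \<le> 1 - t\<^sup>2" by (simp add: power2_eq_square)
    then have "sqrt (1/4) \<le> c0" unfolding c0_def by (rule real_sqrt_le_mono)
    moreover have "sqrt (1/4) = (1/2::real)" by (simp add: real_sqrt_divide)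
    ultimately show ?thesis by simp
  qed
  define e where "e = cnj \<beta> / of_real nb"
  have ee: "cnj e * e = 1"
    using nb0 b0 by (simp add: e_def nb_def complex_norm_square[symmetric] power2_eq_square field_simps)
  have eb: "e * \<beta> = of_real nb"
    using nb0 b0 by (simp add: e_def nb_def field_simps) (metis complex_norm_square of_real_mult power2_eq_square)
  define c where "c = (of_real c0 :: complex)"
  define s where "s = of_real t * e"
  define w where "w = c *s u + s *s v"
  have cc: "cnj c = c" by (simp add: c_def)
  have ss: "cnj s * s = of_real (t\<^sup>2)"
    unfolding s_def using ee by (simp add: power2_eq_square mult_ac)
  have uw: "ip u w = c" unfolding w_def using u uv by (simp add: ip_add_right ip_smult_right)
  have wu: "ip w u = c" using uw cnj_ip[of u w] cc by simp
  have ww: "ip w w = 1"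
  proof -
    have "ip w w = cnj c * c + cnj s * s"
      unfolding w_def using u v uv cnj_ip[of u v]
      by (simp add: ip_add_right ip_add_left ip_smult_right ip_smult_left algebra_simps)
    also have "\<dots> = of_real (c0\<^sup>2 + t\<^sup>2)" unfolding ss cc by (simp add: c_def power2_eq_square)
    also have "\<dots> = 1" using c0sq by simp
    finally show ?thesis .
  qed
  have Qw: "Q *v w = c *s u"
    unfolding w_def by (simp add: matrix_vector_right_distrib mv_smult u v)
  define R where "R = Q - outer u u + outer w w"
  have Rr: "R \<in> rank_proj k"
    unfolding rank_proj_def
  proof (intro CollectI conjI)
    show "cadj R = R" by (simp add: R_def Qh)
    have p1: "Q ** outer u u = outer u u" by (simp add: mult_outer u)
    have p2: "outer u u ** Q = outer u u" by (simp add: outer_mult Qh u)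
    have p3: "Q ** outer w w = outer (c *s u) w" by (simp add: mult_outer Qw)
    have p4: "outer w w ** Q = outer (c *s w) u" by (simp add: outer_mult Qh Qw outer_smult_right cc)
    have p5: "outer u u ** outer u u = outer u u" by (simp add: outer_mult_outer u)
    have p6: "outer u u ** outer w w = outer (c *s u) w" by (simp add: outer_mult_outer uw)
    have p7: "outer w w ** outer u u = outer (c *s w) u" by (simp add: outer_mult_outer wu)
    have p8: "outer w w ** outer w w = outer w w" by (simp add: outer_mult_outer ww)
    show "R ** R = R"
      unfolding R_def
      by (simp add: add_mmult mult_diff_left mult_diff_right matrix_add_ldistrib p1 p2 p3 p4 p5 p6 p7 p8 Qi)
    show "trace R = of_nat k"
      unfolding R_def by (simp add: trace_add trace_sub trace_outer Qt u ww)
  qed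
  have trR: "trace (Z ** R) = trace (Z ** Q) - ip u (Z *v u) + ip w (Z *v w)"
    unfolding R_def by (simp add: mult_diff_right matrix_add_ldistrib trace_add trace_sub trace_mult_outer)
  have wZw: "ip w (Z *v w) = of_real (c0\<^sup>2 * a + 2 * c0 * t * nb + t\<^sup>2 * d)"
  proof -
    have "ip w (Z *v w) = cnj c * c * of_real a + cnj c * s * \<beta> + cnj s * c * cnj \<beta> + cnj s * s * of_real d"
      unfolding w_def ip_outer_expand ar dr vu \<beta>_def ..
    also have "cnj c * s * \<beta> = of_real (c0 * t * nb)"
      by (simp add: c_def s_def mult.assoc eb[symmetric])
    also have "cnj s * c * cnj \<beta> = of_real (c0 * t * nb)"
    proof -
      have "cnj s * c * cnj \<beta> = cnj (cnj c * s * \<beta>)" by (simp add: cc)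
      also have "cnj c * s * \<beta> = of_real (c0 * t * nb)"
        by (simp add: c_def s_def mult.assoc eb[symmetric])
      finally show ?thesis by simp
    qed
    finally show ?thesis unfolding ss cc by (simp add: c_def power2_eq_square algebra_simps)
  qed
  have "Re (trace (Z ** R)) \<le> Re (trace (Z ** Q))" using mx Rr by blast
  then have "- a + (c0\<^sup>2 * a + 2 * c0 * t * nb + t\<^sup>2 * d) \<le> 0"
    unfolding trR wZw by (simp add: ar)
  then have "t * (2 * c0 * nb) \<le> t * (t * (a - d))"
    unfolding c0sq by (simp add: algebra_simps power2_eq_square)
  then have "2 * c0 * nb \<le> t * (a - d)" using t0 by simp
  moreover have "t * (a - d) \<le> t * (\<bar>a\<bar> + \<bar>d\<bar>)" using t0 by (intro mult_left_mono) auto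
  moreover have "nb \<le> 2 * c0 * nb" using c0h nb0 by simp
  ultimately show False using t2 by linarith
qed

lemma normalize_vec:
  assumes "x \<noteq> (0::complex^'n)"
  obtains r :: real where "r > 0" "ip ((of_real (1/r)) *s x) ((of_real (1/r)) *s x) = 1"
proof -
  define r where "r = sqrt (Re (ip x x))"
  have "ip x x \<noteq> 0" using assms ip_self_eq0 by blast
  moreover have "ip x x = of_real (Re (ip x x))" using ip_self_real by (simp add: complex_eq_iff ip_self)
  ultimately have pos: "Re (ip x x) > 0" using ip_self_nonneg[of x] by (metis less_eq_real_def of_real_0)
  then have r0: "r > 0" by (simp add: r_def)
  have "ip ((of_real (1/r)) *s x) ((of_real (1/r)) *s x) = of_real (1/r) * of_real (1/r) * ip x x"
    by (simp add: ip_smult_left ip_smult_right)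
  also have "\<dots> = of_real (1/(r*r) * Re (ip x x))" using \<open>ip x x = _\<close> by (metis of_real_mult times_divide_times_eq mult_1)
  also have "r * r = Re (ip x x)" using pos unfolding r_def by (simp add: real_sqrt_mult_self)
  finally show ?thesis using that r0 pos by simp
qed

lemma comm_of_max:
  fixes Z Q :: "complex^'n^'n"
  assumes Zh: "cadj Z = Z" and Qh: "cadj Q = Q" and Qi: "Q ** Q = Q" and Qt: "trace Q = of_nat k"
    and mx: "\<forall>R\<in>rank_proj k. Re (trace (Z ** R)) \<le> Re (trace (Z ** Q))"
  shows "Z ** Q = Q ** Z"
proof -
  have orth: "ip x (Z *v y) = 0" if x: "Q *v x = x" and y: "Q *v y = 0" for x y
  proof (cases "x = 0 \<or> y = 0")
    case True then show ?thesis by auto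
  next
    case False
    then obtain r1 r2 :: real where r: "r1 > 0" "ip ((of_real (1/r1)) *s x) ((of_real (1/r1)) *s x) = 1"
      "r2 > 0" "ip ((of_real (1/r2)) *s y) ((of_real (1/r2)) *s y) = 1"
      using normalize_vec by metis
    have "ip ((of_real (1/r1)) *s x) (Z *v ((of_real (1/r2)) *s y)) = 0"
      by (rule rot_lemma[OF Zh Qh Qi Qt mx]) (use r x y in \<open>auto simp: mv_smult\<close>)
    then have "of_real (1/r1) * of_real (1/r2) * ip x (Z *v y) = 0"
      by (auto simp: mv_smult ip_smult_left ip_smult_right mult.assoc)
    then show ?thesis using r by auto
  qed
  have M: "Q ** (Z ** (mat 1 - Q)) = 0"
  proof -
    have "(cadj Q ** (Z ** (mat 1 - Q)))$a$b = 0" for a b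
    proof -
      have "(cadj Q ** (Z ** (mat 1 - Q)))$a$b = ip (Q *v axis a 1) ((Z ** (mat 1 - Q)) *v axis b 1)"
        by (rule ip_axis[symmetric])
      also have "\<dots> = ip (Q *v axis a 1) (Z *v ((mat 1 - Q) *v axis b 1))"
        by (simp add: matrix_vector_mul_assoc)
      also have "\<dots> = 0"
      proof (rule orth)
        show "Q *v (Q *v axis a 1) = Q *v axis a 1" by (simp add: matrix_vector_mul_assoc Qi)
        show "Q *v ((mat 1 - Q) *v axis b 1) = 0"
          by (simp add: matrix_vector_mul_assoc mult_diff_right Qi)
      qed
      finally show ?thesis .
    qed
    then show ?thesis using Qh by (simp add: vec_eq_iff)
  qed
  then have QZ: "Q ** Z = Q ** Z ** Q"
    by (simp add: mult_diff_right matrix_mul_assoc)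
  have "Z ** Q = cadj (Q ** Z)" by (simp add: cadj_mult Zh Qh)
  also have "\<dots> = cadj (Q ** Z ** Q)" using QZ by simp
  also have "\<dots> = Q ** Z ** Q" by (simp add: cadj_mult Zh Qh matrix_mul_assoc)
  finally show ?thesis using QZ by simp
qed

lemma attain_comm:
  fixes Z Q :: "complex^'n^'n"
  assumes kle: "k \<le> CARD('n)" and Zh: "cadj Z = Z" and Qa: "Q \<in> attain_set k Z"
  shows "Z ** Q = Q ** Z"
proof -
  have Qr: "Q \<in> rank_proj k" and Qh: "cadj Q = Q" and Qi: "Q ** Q = Q" and Qt: "trace Q = of_nat k"
    using Qa by (auto simp: attain_set_def rank_proj_def)
  have att: "\<forall>R\<in>rank_proj k. cmod (trace (Z ** R)) \<le> cmod (trace (Z ** Q))"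
    using Qa attain_iff[OF kle] by blast
  have real: "trace (Z ** Q) = of_real (Re (trace (Z ** Q)))"
    using trace_herm_real[OF Zh Qh] by (metis Re_complex_of_real Reals_cases)
  show ?thesis
  proof (cases "Re (trace (Z ** Q)) \<ge> 0")
    case True
    have "\<forall>R\<in>rank_proj k. Re (trace (Z ** R)) \<le> Re (trace (Z ** Q))"
    proof
      fix R :: "complex^'n^'n" assume "R \<in> rank_proj k"
      then have "Re (trace (Z ** R)) \<le> cmod (trace (Z ** Q))" using att complex_Re_le_cmod order_trans by blast
      also have "\<dots> = Re (trace (Z ** Q))" using True real by (metis norm_of_real abs_of_nonneg)
      finally show "Re (trace (Z ** R)) \<le> Re (trace (Z ** Q))" .
    qed
    then show ?thesis by (rule comm_of_max[OF Zh Qh Qi Qt])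
  next
    case False
    have neg: "trace ((-Z) ** R) = - trace (Z ** R)" for R :: "complex^'n^'n" 
      by (simp add: matrix_matrix_mult_def trace_def sum_negf)
    have "\<forall>R\<in>rank_proj k. Re (trace ((-Z) ** R)) \<le> Re (trace ((-Z) ** Q))"
    proof
      fix R :: "complex^'n^'n" assume "R \<in> rank_proj k"
      then have "Re (trace ((-Z) ** R)) \<le> cmod (trace (Z ** Q))"
        using att unfolding neg by (metis complex_Re_le_cmod norm_minus_cancel order_trans uminus_complex.sel(1))
      also have "\<dots> = Re (trace ((-Z) ** Q))" using False real unfolding neg by (metis norm_of_real abs_of_neg not_le uminus_complex.sel(1))
      finally show "Re (trace ((-Z) ** R)) \<le> Re (trace ((-Z) ** Q))" .
    qed
    moreover have "cadj (-Z) = -Z" using Zh by (simp add: cadj_def vec_eq_iff)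
    ultimately have "(-Z) ** Q = Q ** (-Z)" by (intro comm_of_max[OF _ Qh Qi Qt])
    then show ?thesis by (simp add: matrix_matrix_mult_def vec_eq_iff sum_negf)
  qed
qed



lemma cs_sq:
  fixes f g :: "'a \<Rightarrow> real"
  shows "(\<Sum>i\<in>A. \<bar>f i\<bar> * \<bar>g i\<bar>)\<^sup>2 \<le> (\<Sum>i\<in>A. (f i)\<^sup>2) * (\<Sum>i\<in>A. (g i)\<^sup>2)"
proof -
  have "0 \<le> (\<Sum>i\<in>A. \<bar>f i\<bar> * \<bar>g i\<bar>)" by (simp add: sum_nonneg)
  then have "(\<Sum>i\<in>A. \<bar>f i\<bar> * \<bar>g i\<bar>)\<^sup>2 \<le> (L2_set f A * L2_set g A)\<^sup>2"
    using L2_set_mult_ineq by (intro power_mono) auto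
  also have "\<dots> = (\<Sum>i\<in>A. (f i)\<^sup>2) * (\<Sum>i\<in>A. (g i)\<^sup>2)"
    unfolding L2_set_def power_mult_distrib by (simp add: sum_nonneg)
  finally show ?thesis .
qed

lemma norm_sq_mat_swap: "(norm (M::complex^'n^'n))\<^sup>2 = (\<Sum>j\<in>UNIV. \<Sum>i\<in>UNIV. (cmod (M$i$j))\<^sup>2)"
  unfolding norm_sq_mat by (rule sum.swap)

lemma norm_mmult_le: "norm ((X::complex^'n^'n) ** (Y::complex^'n^'n)) \<le> norm X * norm Y"
proof -
  have "(norm (X ** Y))\<^sup>2 = (\<Sum>i\<in>UNIV. \<Sum>j\<in>UNIV. (cmod (\<Sum>l\<in>UNIV. X$i$l * Y$l$j))\<^sup>2)"
    unfolding norm_sq_mat by (simp add: matrix_matrix_mult_def)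
  also have "\<dots> \<le> (\<Sum>i\<in>UNIV. \<Sum>j\<in>UNIV. (\<Sum>l\<in>UNIV. (cmod (X$i$l))\<^sup>2) * (\<Sum>l\<in>UNIV. (cmod (Y$l$j))\<^sup>2))"
  proof (intro sum_mono)
    fix i j
    have "cmod (\<Sum>l\<in>UNIV. X$i$l * Y$l$j) \<le> (\<Sum>l\<in>UNIV. \<bar>cmod (X$i$l)\<bar> * \<bar>cmod (Y$l$j)\<bar>)"
      by (rule order_trans[OF norm_sum]) (simp add: norm_mult)
    then have "(cmod (\<Sum>l\<in>UNIV. X$i$l * Y$l$j))\<^sup>2 \<le> (\<Sum>l\<in>UNIV. \<bar>cmod (X$i$l)\<bar> * \<bar>cmod (Y$l$j)\<bar>)\<^sup>2"
      by (intro power_mono) auto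
    also have "\<dots> \<le> (\<Sum>l\<in>UNIV. (cmod (X$i$l))\<^sup>2) * (\<Sum>l\<in>UNIV. (cmod (Y$l$j))\<^sup>2)"
      by (rule cs_sq)
    finally show "(cmod (\<Sum>l\<in>UNIV. X$i$l * Y$l$j))\<^sup>2 \<le> (\<Sum>l\<in>UNIV. (cmod (X$i$l))\<^sup>2) * (\<Sum>l\<in>UNIV. (cmod (Y$l$j))\<^sup>2)" .
  qed
  also have "\<dots> = (\<Sum>i\<in>UNIV. \<Sum>l\<in>UNIV. (cmod (X$i$l))\<^sup>2) * (\<Sum>j\<in>UNIV. \<Sum>l\<in>UNIV. (cmod (Y$l$j))\<^sup>2)"
    by (rule sum_product[symmetric])
  also have "\<dots> = (norm X)\<^sup>2 * (norm Y)\<^sup>2"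
    using norm_sq_mat[of X] norm_sq_mat_swap[of Y] by simp
  also have "\<dots> = (norm X * norm Y)\<^sup>2" by (simp add: power_mult_distrib)
  finally show ?thesis by (rule power2_le_imp_le) simp
qed

lemma sum_pairs: "(\<Sum>i\<in>UNIV. \<Sum>j\<in>UNIV. f i j) = (\<Sum>p\<in>(UNIV::('a::finite \<times> 'b::finite) set). f (fst p) (snd p))"
  by (simp add: sum.cartesian_product split_beta UNIV_Times_UNIV[symmetric] del: UNIV_Times_UNIV)

lemma trace_mmult_le: "cmod (trace ((X::complex^'n^'n) ** Y)) \<le> norm X * norm Y"
proof -
  have "cmod (trace (X ** Y)) = cmod (\<Sum>p\<in>UNIV. X$fst p$snd p * Y$snd p$fst p)"
    unfolding trace_def matrix_matrix_mult_def by (simp add: sum_pairs)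
  also have "\<dots> \<le> (\<Sum>p\<in>UNIV. \<bar>cmod (X$fst p$snd p)\<bar> * \<bar>cmod (Y$snd p$fst p)\<bar>)"
    by (rule order_trans[OF norm_sum]) (simp add: norm_mult)
  also have "\<dots> \<le> norm X * norm Y"
  proof (rule power2_le_imp_le)
    have "(\<Sum>p\<in>UNIV. \<bar>cmod (X$fst p$snd p)\<bar> * \<bar>cmod (Y$snd p$fst p)\<bar>)\<^sup>2
       \<le> (\<Sum>p\<in>UNIV. (cmod (X$fst p$snd p))\<^sup>2) * (\<Sum>p\<in>UNIV. (cmod (Y$snd p$fst p))\<^sup>2)"
      by (rule cs_sq)
    also have "\<dots> = (norm X)\<^sup>2 * (norm Y)\<^sup>2"
    proof -
      have "(\<Sum>p\<in>UNIV. (cmod (X$fst p$snd p))\<^sup>2) = (norm X)\<^sup>2" by (simp add: norm_sq_mat sum_pairs)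
      moreover have "(\<Sum>p\<in>UNIV. (cmod (Y$snd p$fst p))\<^sup>2) = (norm Y)\<^sup>2" by (simp add: norm_sq_mat_swap sum_pairs)
      ultimately show ?thesis by simp
    qed
    finally show "(\<Sum>p\<in>UNIV. \<bar>cmod (X$fst p$snd p)\<bar> * \<bar>cmod (Y$snd p$fst p)\<bar>)\<^sup>2 \<le> (norm X * norm Y)\<^sup>2"
      by (simp add: power_mult_distrib)
  qed simp
  finally show ?thesis .
qed

lemma norm_cadj: "norm (cadj (M::complex^'n^'n)) = norm M"
proof -
  have "(norm (cadj M))\<^sup>2 = (norm M)\<^sup>2"
    unfolding norm_sq_mat[of "cadj M"] norm_sq_mat_swap[of M] by (simp add: cadj_def)
  then show ?thesis by (simp add: power2_eq_iff_nonneg)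
qed

lemma idem_compl: "P ** P = P \<Longrightarrow> (mat 1 - P) ** (mat 1 - P) = mat 1 - (P::complex^'n^'n)"
  by (simp add: mult_diff_left mult_diff_right)

lemma shift_attain:
  fixes Z P :: "complex^'n^'n"
  assumes kle: "k \<le> CARD('n)" and Zh: "cadj Z = Z" and comm: "Z ** P = P ** Z"
    and Pr: "P \<in> rank_proj k" and c: "c \<ge> 2 * norm Z"
  shows "P \<in> attain_set k (Z + c *\<^sub>R P)"
proof -
  have Ph: "cadj P = P" and Pi: "P ** P = P" and Pt: "trace P = of_nat k" using Pr by (auto simp: rank_proj_def)
  define Y where "Y = Z + c *\<^sub>R P"
  have Yh: "cadj Y = Y" by (simp add: Y_def Zh Ph)
  have nZ: "norm Z \<ge> 0" by simp
  have sk: "norm R \<le> real k" if "R \<in> rank_proj k" for R :: "complex^'n^'n"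
  proof -
    have "(norm R)\<^sup>2 = real k" using norm_rank_proj[OF that] .
    moreover have "real k \<le> (real k)\<^sup>2" by (cases k) (auto simp: power2_eq_square)
    ultimately have "(norm R)\<^sup>2 \<le> (real k)\<^sup>2" by simp
    then show ?thesis by (rule power2_le_imp_le) simp
  qed
  have "\<forall>R\<in>rank_proj k. cmod (trace (Y ** R)) \<le> cmod (trace (Y ** P))"
  proof
    fix R :: "complex^'n^'n" assume Rr: "R \<in> rank_proj k"
    have Rh: "cadj R = R" and Ri: "R ** R = R" and Rt: "trace R = of_nat k" using Rr by (auto simp: rank_proj_def)
    define B where "B = (mat 1 - R) ** P"
    define C where "C = R ** (mat 1 - P)"
    have BB: "cadj B ** B = P ** (mat 1 - R) ** P"
      unfolding B_def by (simp add: cadj_mult Ph Rh matrix_mul_assoc[symmetric])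
        (simp add: matrix_mul_assoc idem_compl[OF Ri])
    have CC: "cadj C ** C = (mat 1 - P) ** R ** (mat 1 - P)"
      unfolding C_def by (simp add: cadj_mult Ph Rh matrix_mul_assoc[symmetric])
        (simp add: matrix_mul_assoc Ri)
    define \<tau> where "\<tau> = trace (P ** R)"
    have trPRP: "trace (P ** R ** P) = \<tau>"
      unfolding \<tau>_def by (metis Pi matrix_mul_assoc trace_mul_sym)
    have trBB: "trace (cadj B ** B) = of_nat k - \<tau>"
      unfolding BB by (simp add: mult_diff_left mult_diff_right trace_sub Pi Pt trPRP)
    have trCC: "trace (cadj C ** C) = of_nat k - \<tau>"
    proof -
      have "trace ((mat 1 - P) ** R ** (mat 1 - P)) = trace ((mat 1 - P) ** (mat 1 - P) ** R)"
        by (metis matrix_mul_assoc trace_mul_sym)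
      also have "\<dots> = trace R - trace (P ** R)" by (simp add: idem_compl[OF Pi] mult_diff_left mult_diff_right Pi trace_sub)
      finally show ?thesis unfolding CC \<tau>_def Rt .
    qed
    have trZ: "trace (Z ** P) - trace (Z ** R) = trace (Z ** (cadj B ** B)) - trace (Z ** (cadj C ** C))"
    proof -
      have e1: "trace (Z ** (P ** R ** P)) = trace (Z ** P ** R)"
      proof -
        have "trace (Z ** (P ** R ** P)) = trace (P ** (Z ** P ** R))"
          by (metis matrix_mul_assoc trace_mul_sym)
        also have "\<dots> = trace (Z ** P ** R)" by (simp add: matrix_mul_assoc comm[symmetric]) (simp add: matrix_mul_assoc[symmetric] Pi)
        finally show ?thesis .
      qed
      have e2: "trace (Z ** ((mat 1 - P) ** R ** (mat 1 - P))) = trace (Z ** R) - trace (Z ** P ** R)"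
      proof -
        have cm: "Z ** (mat 1 - P) = (mat 1 - P) ** Z" by (simp add: mult_diff_left mult_diff_right comm)
        have "trace (Z ** ((mat 1 - P) ** R ** (mat 1 - P))) = trace ((mat 1 - P) ** (Z ** (mat 1 - P) ** R))"
          by (metis matrix_mul_assoc trace_mul_sym)
        also have "\<dots> = trace (Z ** ((mat 1 - P) ** (mat 1 - P)) ** R)"
          by (simp add: matrix_mul_assoc cm[symmetric])
        also have "\<dots> = trace (Z ** R) - trace (Z ** P ** R)"
          unfolding idem_compl[OF Pi] by (simp add: mult_diff_left mult_diff_right trace_sub)
        finally show ?thesis .
      qed
      have "P ** (mat 1 - R) ** P = P - P ** R ** P" by (simp add: mult_diff_left mult_diff_right Pi)
      then have e0: "trace (Z ** (P ** (mat 1 - R) ** P)) = trace (Z ** P) - trace (Z ** (P ** R ** P))"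
        by (simp add: mult_diff_right trace_sub)
      show ?thesis unfolding BB CC e0 e1 e2 by simp
    qed
    have nB: "of_real ((norm B)\<^sup>2) = of_nat k - \<tau>" using trBB trace_adj_self[of B] by simp
    have nC: "of_real ((norm C)\<^sup>2) = of_nat k - \<tau>" using trCC trace_adj_self[of C] by simp
    define \<delta> where "\<delta> = (norm B)\<^sup>2"
    have \<delta>0: "\<delta> \<ge> 0" by (simp add: \<delta>_def)
    have \<tau>r: "\<tau> = of_real (real k - \<delta>)" using nB by (simp add: \<delta>_def)
    have nC': "(norm C)\<^sup>2 = \<delta>" using nB nC by (metis of_real_eq_iff \<delta>_def)
    have b1: "cmod (trace (Z ** (cadj B ** B))) \<le> norm Z * \<delta>"
    proof -
      have "cmod (trace (Z ** (cadj B ** B))) \<le> norm Z * norm (cadj B ** B)" by (rule trace_mmult_le)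
      also have "\<dots> \<le> norm Z * (norm (cadj B) * norm B)" by (intro mult_left_mono norm_mmult_le nZ)
      finally show ?thesis by (simp add: norm_cadj \<delta>_def power2_eq_square)
    qed
    have b2: "cmod (trace (Z ** (cadj C ** C))) \<le> norm Z * \<delta>"
    proof -
      have "cmod (trace (Z ** (cadj C ** C))) \<le> norm Z * norm (cadj C ** C)" by (rule trace_mmult_le)
      also have "\<dots> \<le> norm Z * (norm (cadj C) * norm C)" by (intro mult_left_mono norm_mmult_le nZ)
      finally show ?thesis using nC' by (simp add: norm_cadj power2_eq_square)
    qed
    have "trace (Y ** P) = trace (Z ** P) + c *\<^sub>R (of_nat k :: complex)"
      by (simp add: Y_def add_mmult mmult_scaleR_left trace_add trace_scaleR Pi Pt)
    then have trYP: "trace (Y ** P) = trace (Z ** P) + of_real (c * real k)"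
      by (simp add: scaleR_conv_of_real)
    have "trace (Y ** R) = trace (Z ** R) + c *\<^sub>R (of_real (real k - \<delta>) :: complex)"
      by (simp add: Y_def add_mmult mmult_scaleR_left trace_add trace_scaleR \<tau>r[unfolded \<tau>_def])
    then have trYR: "trace (Y ** R) = trace (Z ** R) + of_real (c * (real k - \<delta>))"
      by (simp add: scaleR_conv_of_real)
    have ZPr: "trace (Z ** P) \<in> \<real>" by (rule trace_herm_real[OF Zh Ph])
    have ZRr: "trace (Z ** R) \<in> \<real>" by (rule trace_herm_real[OF Zh Rh])
    have k0: "\<delta> \<le> real k"
    proof -
      have "(norm C)\<^sup>2 \<ge> 0" by simp
      have "Re \<tau> = Re (trace ((P ** R) ** cadj (P ** R)))" 
        unfolding \<tau>_def by (simp add: cadj_mult Ph Rh matrix_mul_assoc[symmetric]) (simp add: matrix_mul_assoc Ri trPRP[unfolded \<tau>_def])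
      also have "\<dots> = (norm (cadj (P ** R)))\<^sup>2"
        using trace_adj_self[of "cadj (P ** R)"] by simp
      finally have "Re \<tau> \<ge> 0" by simp
      then show ?thesis using \<tau>r by simp
    qed
    have zp: "cmod (trace (Z ** P)) \<le> norm Z * real k"
      using trace_mmult_le[of Z P] sk[OF Pr] by (meson mult_left_mono nZ order_trans)
    have zr: "cmod (trace (Z ** R)) \<le> norm Z * real k"
      using trace_mmult_le[of Z R] sk[OF Rr] by (meson mult_left_mono nZ order_trans)
    define p where "p = Re (trace (Z ** P))"
    define r where "r = Re (trace (Z ** R))"
    have pe: "trace (Z ** P) = of_real p" using ZPr by (simp add: p_def complex_eq_iff)
    have re: "trace (Z ** R) = of_real r" using ZRr by (simp add: r_def complex_eq_iff)
    have d1: "p - r \<ge> - 2 * norm Z * \<delta>"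
    proof -
      have "p - r = Re (trace (Z ** (cadj B ** B))) - Re (trace (Z ** (cadj C ** C)))"
        using arg_cong[OF trZ, of Re] by (simp add: p_def r_def)
      moreover have "Re (trace (Z ** (cadj B ** B))) \<ge> - (norm Z * \<delta>)"
        using b1 abs_Re_le_cmod[of "trace (Z ** (cadj B ** B))"] by linarith
      moreover have "Re (trace (Z ** (cadj C ** C))) \<le> norm Z * \<delta>"
        using b2 abs_Re_le_cmod[of "trace (Z ** (cadj C ** C))"] by linarith
      ultimately show ?thesis by linarith
    qed
    have "\<bar>p\<bar> \<le> norm Z * real k" using zp pe by simp
    moreover have "\<bar>r\<bar> \<le> norm Z * real k" using zr re by simp
    moreover have "c * \<delta> \<ge> 2 * norm Z * \<delta>" using c \<delta>0 by (intro mult_right_mono) auto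
    moreover have "c * real k \<ge> 2 * norm Z * real k" using c by (intro mult_right_mono) auto
    moreover have "c * (real k - \<delta>) \<ge> 0" using c nZ k0 by (intro mult_nonneg_nonneg) (auto, smt (verit) norm_ge_zero)
    ultimately have "\<bar>r + c * (real k - \<delta>)\<bar> \<le> \<bar>p + c * real k\<bar>"
      using d1 by (simp add: algebra_simps abs_le_iff) 
    then show "cmod (trace (Y ** R)) \<le> cmod (trace (Y ** P))"
      unfolding trYP trYR pe re by (metis norm_of_real of_real_add)
  qed
  then show ?thesis unfolding Y_def[symmetric] using attain_iff[OF kle] Pr by blast
qed



definition smat :: "complex \<Rightarrow> complex^'n^'n \<Rightarrow> complex^'n^'n" where
  "smat c M = (\<chi> a b. c * M$a$b)"

lemma cadj_smat: "cadj (smat c M) = smat (cnj c) (cadj M)"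
  by (simp add: smat_def cadj_def vec_eq_iff)
lemma smat_mult_left: "smat c M ** N = smat c (M ** N)"
  by (simp add: smat_def matrix_matrix_mult_def vec_eq_iff sum_distrib_left mult_ac)
lemma smat_mult_right: "M ** smat c N = smat c (M ** N)"
  by (simp add: smat_def matrix_matrix_mult_def vec_eq_iff sum_distrib_left mult_ac)
lemma smat_diff: "smat c (M - N) = smat c M - smat c N"
  by (simp add: smat_def vec_eq_iff algebra_simps)
lemma smat_add: "smat c (M + N) = smat c M + smat c N"
  by (simp add: smat_def vec_eq_iff algebra_simps)
lemma smat_smat: "smat c (smat d M) = smat (c * d) M"
  by (simp add: smat_def vec_eq_iff algebra_simps)
lemma smat_0[simp]: "smat 0 M = 0" by (simp add: smat_def vec_eq_iff)
lemma smat_1[simp]: "smat 1 M = M" by (simp add: smat_def vec_eq_iff)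
lemma smat_m1: "smat (-1) M = - M" by (simp add: smat_def vec_eq_iff)
lemma trace_smat: "trace (smat c M) = c * trace M"
  by (simp add: smat_def trace_def sum_distrib_left)

lemma double_cancel: "(X::complex^'n^'n) + X = Y + Y \<Longrightarrow> X = Y"
  by (simp add: vec_eq_iff)

lemma comm_sandwich:
  fixes P Q :: "complex^'n^'n"
  assumes Qh: "cadj Q = Q" and Qi: "Q ** Q = Q"
    and hyp: "\<forall>Y. cadj Y = Y \<longrightarrow> Y ** Q = Q ** Y \<longrightarrow> Y ** P = P ** Y"
  shows "(Q ** M ** Q) ** P = P ** (Q ** M ** Q)"
proof -
  define Z where "Z = Q ** M ** Q"
  have ZQ: "Z ** Q = Z" "Q ** Z = Z" unfolding Z_def
    by (simp_all add: matrix_mul_assoc[symmetric] Qi) (simp add: matrix_mul_assoc Qi)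
  have ZaQ: "cadj Z ** Q = cadj Z" "Q ** cadj Z = cadj Z"
    using arg_cong[OF ZQ(1), of cadj] arg_cong[OF ZQ(2), of cadj] by (simp_all add: cadj_mult Qh)
  define H1 where "H1 = Z + cadj Z"
  define H2 where "H2 = smat \<i> (Z - cadj Z)"
  have H1h: "cadj H1 = H1" by (simp add: H1_def add.commute)
  have H2h: "cadj H2 = H2" by (simp add: H2_def cadj_smat smat_diff smat_smat)
      (simp add: smat_def vec_eq_iff algebra_simps)
  have "H1 ** Q = Q ** H1" by (simp add: H1_def add_mmult matrix_add_ldistrib ZQ ZaQ)
  then have H1c: "H1 ** P = P ** H1" using hyp H1h by blast
  have "H2 ** Q = Q ** H2"
    by (simp add: H2_def smat_mult_left smat_mult_right mult_diff_left mult_diff_right ZQ ZaQ)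
  then have H2c: "H2 ** P = P ** H2" using hyp H2h by blast
  have "H1 - smat \<i> H2 = Z + Z"
    by (simp add: H1_def H2_def smat_smat smat_diff smat_m1)
  moreover have "(H1 - smat \<i> H2) ** P = P ** (H1 - smat \<i> H2)"
    by (simp add: mult_diff_left mult_diff_right smat_mult_left smat_mult_right H1c H2c)
  ultimately have "(Z + Z) ** P = P ** (Z + Z)" by metis
  then have "Z ** P + Z ** P = P ** Z + P ** Z"
    by (simp only: add_mmult matrix_add_ldistrib)
  then show ?thesis unfolding Z_def by (rule double_cancel)
qed

definition Emat :: "'n \<Rightarrow> 'n \<Rightarrow> complex^'n^'n" where
  "Emat i j = (\<chi> a b. if a = i \<and> b = j then 1 else 0)"

lemma Emat_left: "(A ** Emat i j ** B) $ a $ b = A$a$i * B$j$b"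
proof -
  have "(A ** Emat i j) $ a $ l = (if l = j then A$a$i else 0)" for l
    by (simp add: matrix_matrix_mult_def Emat_def if_distrib[of "\<lambda>x. _ * x"] cong: if_cong)
  then show ?thesis
    by (simp add: matrix_matrix_mult_def if_distrib[of "\<lambda>x. x * _"] cong: if_cong)
qed

lemma scalar_part:
  fixes P Q :: "complex^'n^'n"
  assumes Qh: "cadj Q = Q" and Qi: "Q ** Q = Q" and Q0: "Q \<noteq> 0"
    and Pi: "P ** P = P"
    and hyp: "\<forall>Y. cadj Y = Y \<longrightarrow> Y ** Q = Q ** Y \<longrightarrow> Y ** P = P ** Y"
  shows "\<exists>la\<in>{0,1}. P ** Q = smat la Q"
proof -
  have sw: "(Q ** M ** Q) ** P = P ** (Q ** M ** Q)" for M using comm_sandwich[OF Qh Qi hyp] .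
  have PQ: "Q ** P = P ** Q" using sw[of "mat 1"] by (simp add: Qi)
  define A where "A = P ** Q"
  have key: "A ** M ** Q = Q ** M ** A" for M
  proof -
    have "A ** M ** Q = P ** (Q ** M ** Q)" by (simp add: A_def matrix_mul_assoc)
    also have "\<dots> = Q ** M ** Q ** P" using sw[of M] by simp
    also have "\<dots> = Q ** M ** A" by (simp add: A_def matrix_mul_assoc[symmetric] PQ)
    finally show ?thesis .
  qed
  obtain j b where jb: "Q$j$b \<noteq> 0" using Q0 by (auto simp: vec_eq_iff)
  define la where "la = A$j$b / Q$j$b"
  have Aeq: "A = smat la Q"
  proof -
    have "A$a$i = la * Q$a$i" for a i
    proof -
      have "(A ** Emat i j ** Q)$a$b = (Q ** Emat i j ** A)$a$b" using key by simp
      then have "A$a$i * Q$j$b = Q$a$i * A$j$b" by (simp add: Emat_left)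
      then show ?thesis using jb by (simp add: la_def field_simps)
    qed
    then show ?thesis by (simp add: smat_def vec_eq_iff)
  qed
  have "A ** A = A" unfolding A_def
    by (metis PQ Pi Qi matrix_mul_assoc)
  then have "smat (la * la) Q = smat la Q"
    unfolding Aeq by (simp add: smat_mult_left smat_mult_right smat_smat Qi)
  then have "la * la * Q$j$b = la * Q$j$b" by (auto simp: smat_def vec_eq_iff)
  then have "la * la = la" using jb by simp
  then have "la \<in> {0,1}" by (metis insertCI mult_cancel_left2 mult_zero_right)
  then show ?thesis using Aeq A_def by (intro bexI[of _ la]) auto
qed

lemma proj_nonzero: "cadj Q = Q \<Longrightarrow> Q ** Q = Q \<Longrightarrow> trace Q = of_nat m \<Longrightarrow> m \<ge> 1 \<Longrightarrow> Q \<noteq> (0::complex^'n^'n)"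
  by (auto simp: trace_def)

lemma comm_forces:
  fixes P1 P2 :: "complex^'n^'n"
  assumes k1: "1 \<le> k" and kn: "k < CARD('n)"
    and P1: "P1 \<in> rank_proj k" and P2: "P2 \<in> rank_proj k"
    and hyp: "\<forall>Y. cadj Y = Y \<longrightarrow> Y ** P2 = P2 ** Y \<longrightarrow> Y ** P1 = P1 ** Y"
  shows "P1 = P2 \<or> (P1 = mat 1 - P2 \<and> CARD('n) = 2 * k)"
proof -
  have P1h: "cadj P1 = P1" and P1i: "P1 ** P1 = P1" and P1t: "trace P1 = of_nat k" using P1 by (auto simp: rank_proj_def)
  have P2h: "cadj P2 = P2" and P2i: "P2 ** P2 = P2" and P2t: "trace P2 = of_nat k" using P2 by (auto simp: rank_proj_def)
  define P2' where "P2' = mat 1 - P2"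
  have P2'h: "cadj P2' = P2'" by (simp add: P2'_def P2h)
  have P2'i: "P2' ** P2' = P2'" unfolding P2'_def by (rule idem_compl[OF P2i])
  have P2't: "trace P2' = of_nat (CARD('n) - k)" using kn by (simp add: P2'_def trace_sub trace_I P2t of_nat_diff)
  have hyp': "\<forall>Y. cadj Y = Y \<longrightarrow> Y ** P2' = P2' ** Y \<longrightarrow> Y ** P1 = P1 ** Y"
    using hyp by (simp add: P2'_def mult_diff_left mult_diff_right)
  obtain la where l: "la \<in> {0,1}" "P1 ** P2 = smat la P2"
    using scalar_part[OF P2h P2i proj_nonzero[OF P2h P2i P2t k1] P1i hyp] by blast
  have "P2' \<noteq> 0" using proj_nonzero[OF P2'h P2'i P2't] kn by simp
  then obtain \<mu> where m: "\<mu> \<in> {0,1}" "P1 ** P2' = smat \<mu> P2'"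
    using scalar_part[OF P2'h P2'i _ P1i hyp'] by blast
  have P1eq: "P1 = smat la P2 + smat \<mu> P2'"
    using l(2) m(2) by (metis P2'_def add.commute diff_add_cancel matrix_add_ldistrib matrix_mul_rid)
  have tr: "of_nat k = la * of_nat k + \<mu> * of_nat (CARD('n) - k)"
    using arg_cong[OF P1eq, of trace] by (simp add: trace_add trace_smat P1t P2t P2't)
  have kpos: "(of_nat k :: complex) \<noteq> 0" using k1 by simp
  have nk: "(of_nat (CARD('n) - k) :: complex) \<noteq> 0" using kn by simp
  show ?thesis
  proof -
    consider "la = 0" "\<mu> = 0" | "la = 0" "\<mu> = 1" | "la = 1" "\<mu> = 0" | "la = 1" "\<mu> = 1" using l m by blast
    then show ?thesis
    proof cases
      case 1 then show ?thesis using tr kpos by simp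
    next
      case 2
      then have "of_nat k = (of_nat (CARD('n) - k) :: complex)" using tr by simp
      then have "k = CARD('n) - k" using of_nat_eq_iff by blast
      moreover have "P1 = mat 1 - P2" using 2 P1eq by (simp add: P2'_def)
      ultimately show ?thesis using kn by auto
    next
      case 3 then show ?thesis using P1eq by simp
    next
      case 4 then show ?thesis using tr nk by simp
    qed
  qed
qed



definition orthonormal :: "nat \<Rightarrow> (nat \<Rightarrow> complex^'n) \<Rightarrow> bool" where
  "orthonormal m u \<longleftrightarrow> (\<forall>i<m. \<forall>j<m. ip (u i) (u j) = (if i = j then 1 else 0))"

lemma decomp_mv:
  assumes "orthonormal m u" "i < m"
  shows "(\<Sum>l<m. outer (u l) (u l)) *v u i = u i"
proof -
  have "(\<Sum>l<m. outer (u l) (u l)) *v u i = (\<Sum>l<m. ip (u l) (u i) *s u l)"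
    by (simp add: sum_mv outer_mv)
  also have "\<dots> = (\<Sum>l<m. if l = i then u l else 0)"
    using assms by (intro sum.cong) (auto simp: orthonormal_def)
  also have "\<dots> = u i" using assms(2) by simp
  finally show ?thesis .
qed

lemma proj_zero: "cadj P = P \<Longrightarrow> P ** P = P \<Longrightarrow> trace P = 0 \<Longrightarrow> P = (0::complex^'n^'n)"
proof -
  assume a: "cadj P = P" "P ** P = P" "trace P = 0"
  then have "of_real ((norm P)\<^sup>2) = (0::complex)" using trace_adj_self[of P] by simp
  then show "P = 0" by simp
qed

lemma decomp_exists:
  "cadj P = P \<Longrightarrow> P ** P = P \<Longrightarrow> trace P = of_nat m \<Longrightarrow>
   \<exists>u. orthonormal m u \<and> P = (\<Sum>i<m. outer (u i) (u i :: complex^'n))"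
proof (induction m arbitrary: P)
  case 0
  then have "P = 0" using proj_zero by simp
  then show ?case by (auto simp: orthonormal_def)
next
  case (Suc m)
  have Ph: "cadj P = P" and Pi: "P ** P = P" and Pt: "trace P = of_nat (Suc m)" using Suc.prems by auto
  have "P \<noteq> 0" using proj_nonzero[OF Ph Pi Pt] by simp
  then obtain j where x0: "P *v axis j 1 \<noteq> 0"
    by (auto simp: vec_eq_iff matrix_vector_mult_def axis_def if_distrib[of "\<lambda>x. _ * x"] cong: if_cong)
  define x where "x = P *v axis j 1"
  have Px: "P *v x = x" unfolding x_def by (simp add: matrix_vector_mul_assoc Pi)
  obtain r :: real where r: "r > 0" "ip ((of_real (1/r)) *s x) ((of_real (1/r)) *s x) = 1"
    using normalize_vec x0 x_def by metis
  define u where "u = (of_real (1/r)) *s x"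
  have uu: "ip u u = 1" using r by (simp add: u_def)
  have Pu: "P *v u = u" by (simp add: u_def mv_smult Px)
  define P' where "P' = P - outer u u"
  have P'h: "cadj P' = P'" by (simp add: P'_def Ph)
  have P'i: "P' ** P' = P'"
    unfolding P'_def by (simp add: mult_diff_left mult_diff_right Pi mult_outer outer_mult Ph Pu outer_mult_outer uu matrix_vector_mult_diff_rdistrib outer_mv)
  have P't: "trace P' = of_nat m" by (simp add: P'_def trace_sub trace_outer uu Pt)
  obtain w where w: "orthonormal m w" "P' = (\<Sum>i<m. outer (w i) (w i))"
    using Suc.IH[OF P'h P'i P't] by blast
  have P'u: "P' *v u = 0" by (simp add: P'_def matrix_vector_mult_diff_rdistrib Pu outer_mv uu)
  have uw: "ip u (w i) = 0" if "i < m" for i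
  proof -
    have "ip u (w i) = ip u (P' *v w i)" using decomp_mv[OF w(1) that] w(2) by simp
    also have "\<dots> = ip (P' *v u) (w i)" by (rule ip_mv_herm[OF P'h])
    finally show ?thesis by (simp add: P'u)
  qed
  define u' where "u' = w(m := u)"
  have "orthonormal (Suc m) u'"
    unfolding orthonormal_def
  proof (intro allI impI)
    fix i j assume "i < Suc m" "j < Suc m"
    then show "ip (u' i) (u' j) = (if i = j then 1 else 0)"
      using w(1) uu uw cnj_ip[of u] by (auto simp: u'_def orthonormal_def less_Suc_eq) (metis complex_cnj_zero)
  qed
  moreover have "P = (\<Sum>i<Suc m. outer (u' i) (u' i))"
  proof -
    have "(\<Sum>i<Suc m. outer (u' i) (u' i)) = (\<Sum>i<m. outer (w i) (w i)) + outer u u"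
      by (simp add: u'_def)
    also have "\<dots> = P" by (simp add: w(2)[symmetric] P'_def)
    finally show ?thesis by simp
  qed
  ultimately show ?case by blast
qed

lemma sum_outer_mult_orth:
  assumes "orthonormal m u"
  shows "(\<Sum>i<m. outer (a i) (u i)) ** (\<Sum>j<m. outer (u j) (b j)) = (\<Sum>i<m. outer (a i) (b i :: complex^'n))"
proof -
  have "(\<Sum>i<m. outer (a i) (u i)) ** (\<Sum>j<m. outer (u j) (b j)) = (\<Sum>i<m. \<Sum>j<m. outer (ip (u i) (u j) *s a i) (b j))"
    by (simp add: sum_mmult_left sum_mmult_right outer_mult_outer) (rule sum.swap)
  also have "\<dots> = (\<Sum>i<m. \<Sum>j<m. if j = i then outer (a i) (b j) else 0)"
    using assms by (intro sum.cong refl) (auto simp: orthonormal_def)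
  also have "\<dots> = (\<Sum>i<m. outer (a i) (b i))" by simp
  finally show ?thesis .
qed

lemma sum_outer_mult_zero:
  assumes "\<forall>i<(m::nat). \<forall>j<(m'::nat). ip (u i) (v j) = 0"
  shows "(\<Sum>i<m. outer (a i) (u i)) ** (\<Sum>j<m'. outer (v j) (b j)) = (0::complex^'n^'n)"
proof -
  have "(\<Sum>i<m. outer (a i) (u i)) ** (\<Sum>j<m'. outer (v j) (b j)) = (\<Sum>i<m. \<Sum>j<m'. outer (ip (u i) (v j) *s a i) (b j))"
    by (simp add: sum_mmult_left sum_mmult_right outer_mult_outer) (rule sum.swap)
  also have "\<dots> = 0" using assms by (intro sum.neutral ballI) auto
  finally show ?thesis .
qed

lemma mult_sum_outer: "(M::complex^'n^'n) ** (\<Sum>i<(m::nat). outer (a i) (b i)) = (\<Sum>i<m. outer (M *v a i) (b i))"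
  by (simp add: sum_mmult_right mult_outer)

lemma sum_outer_mult: "(\<Sum>i<(m::nat). outer (a i) (b i)) ** (M::complex^'n^'n) = (\<Sum>i<m. outer (a i) (cadj M *v b i))"
  by (simp add: sum_mmult_left outer_mult)

definition comm_sp :: "complex^'n^'n \<Rightarrow> (complex^'n^'n) set" where
  "comm_sp P = {Z. cadj Z = Z \<and> Z ** P = P ** Z}"

lemma subspace_comm_sp: "subspace (comm_sp P)"
  unfolding subspace_def comm_sp_def
  by (auto simp: add_mmult matrix_add_ldistrib mmult_scaleR_left mmult_scaleR_right)

lemma compl_rank_proj:
  assumes "(P::complex^'n^'n) \<in> rank_proj k" "k \<le> CARD('n)"
  shows "mat 1 - P \<in> rank_proj (CARD('n) - k)"
  using assms by (auto simp: rank_proj_def idem_compl trace_sub trace_I of_nat_diff)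

lemma proj_decomp:
  assumes P: "(P::complex^'n^'n) \<in> rank_proj k" and kle: "k \<le> CARD('n)"
  obtains p s where "orthonormal k p" "P = (\<Sum>i<k. outer (p i) (p i))"
    "orthonormal (CARD('n) - k) s" "mat 1 - P = (\<Sum>j<CARD('n) - k. outer (s j) (s j))"
    "\<forall>i<k. P *v p i = p i" "\<forall>j<CARD('n) - k. P *v s j = 0"
    "\<forall>i<k. \<forall>j<CARD('n) - k. ip (p i) (s j) = 0"
proof -
  have Ph: "cadj P = P" using P by (auto simp: rank_proj_def)
  obtain p where p: "orthonormal k p" "P = (\<Sum>i<k. outer (p i) (p i))"
    using decomp_exists[of P k] P by (auto simp: rank_proj_def)
  obtain s where s: "orthonormal (CARD('n) - k) s" "mat 1 - P = (\<Sum>j<CARD('n) - k. outer (s j) (s j))"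
    using decomp_exists[of "mat 1 - P" "CARD('n) - k"] compl_rank_proj[OF P kle] by (auto simp: rank_proj_def)
  have Pp: "\<forall>i<k. P *v p i = p i" using decomp_mv[OF p(1)] p(2) by simp
  have Ps: "\<forall>j<CARD('n) - k. P *v s j = 0"
  proof (intro allI impI)
    fix j assume j: "j < CARD('n) - k"
    have "(mat 1 - P) *v s j = s j" using decomp_mv[OF s(1) j] s(2) by simp
    then show "P *v s j = 0" by (simp add: matrix_vector_mult_diff_rdistrib)
  qed
  have "\<forall>i<k. \<forall>j<CARD('n) - k. ip (p i) (s j) = 0" using ip_orth[OF Ph] Pp Ps by blast
  then show ?thesis using that p s Pp Ps by blast
qed


lemma dim_comm_le:
  fixes P Q :: "complex^'n^'n"
  assumes P: "P \<in> rank_proj k" and Q: "Q \<in> rank_proj k" and kle: "k \<le> CARD('n)"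
  shows "dim (comm_sp Q) \<le> dim (comm_sp P)"
proof -
  define n' where "n' = CARD('n) - k"
  obtain p s where p: "orthonormal k p" "P = (\<Sum>i<k. outer (p i) (p i))"
    "orthonormal n' s" "mat 1 - P = (\<Sum>j<n'. outer (s j) (s j))"
    "\<forall>i<k. P *v p i = p i" "\<forall>j<n'. P *v s j = 0" "\<forall>i<k. \<forall>j<n'. ip (p i) (s j) = 0"
    by (rule proj_decomp[OF P kle, folded n'_def])
  obtain q r where q: "orthonormal k q" "Q = (\<Sum>i<k. outer (q i) (q i))"
    "orthonormal n' r" "mat 1 - Q = (\<Sum>j<n'. outer (r j) (r j))"
    "\<forall>i<k. Q *v q i = q i" "\<forall>j<n'. Q *v r j = 0" "\<forall>i<k. \<forall>j<n'. ip (q i) (r j) = 0"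
    by (rule proj_decomp[OF Q kle, folded n'_def])
  have Ph: "cadj P = P" and Qh: "cadj Q = Q" using P Q by (auto simp: rank_proj_def)
  define W where "W = (\<Sum>i<k. outer (p i) (q i)) + (\<Sum>j<n'. outer (s j) (r j))"
  have cW: "cadj W = (\<Sum>i<k. outer (q i) (p i)) + (\<Sum>j<n'. outer (r j) (s j))"
    by (simp add: W_def cadj_sum)
  have sp: "\<forall>j<n'. \<forall>i<k. ip (s j) (p i) = 0" using p(7) cnj_ip by (metis complex_cnj_zero)
  have WW: "cadj W ** W = mat 1"
  proof -
    have "cadj W ** W = (\<Sum>i<k. outer (q i) (q i)) + (\<Sum>j<n'. outer (r j) (r j))"
      unfolding cW unfolding W_def
      by (simp add: add_mmult matrix_add_ldistrib sum_outer_mult_orth[OF p(1)] sum_outer_mult_orth[OF p(3)]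
          sum_outer_mult_zero[OF p(7)] sum_outer_mult_zero[OF sp])
    also have "\<dots> = mat 1" using q(2) q(4) by (metis add.commute diff_add_cancel)
    finally show ?thesis .
  qed
  have PW: "P ** W = W ** Q"
  proof -
    have "P ** W = (\<Sum>i<k. outer (p i) (q i))"
      unfolding W_def matrix_add_ldistrib mult_sum_outer using p(5) p(6) by simp
    moreover have "W ** Q = (\<Sum>i<k. outer (p i) (q i))"
      unfolding W_def add_mmult sum_outer_mult using q(5) q(6) Qh by simp
    ultimately show ?thesis by simp
  qed
  have WP: "cadj W ** P = Q ** cadj W" using arg_cong[OF PW, of cadj] by (simp add: cadj_mult Ph Qh)
  define \<phi> where "\<phi> Y = W ** Y ** cadj W" for Y
  have lin: "linear \<phi>"
    by (rule linearI) (simp_all add: \<phi>_def add_mmult matrix_add_ldistrib mmult_scaleR_left mmult_scaleR_right)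
  have inj: "inj_on \<phi> (span (comm_sp Q))"
  proof (rule inj_onI)
    fix X Y assume "\<phi> X = \<phi> Y"
    then have "cadj W ** \<phi> X ** W = cadj W ** \<phi> Y ** W" by simp
    then show "X = Y" by (simp add: \<phi>_def matrix_mul_assoc WW) (simp add: matrix_mul_assoc[symmetric] WW)
  qed
  have img: "\<phi> ` comm_sp Q \<subseteq> comm_sp P"
  proof
    fix Z assume "Z \<in> \<phi> ` comm_sp Q"
    then obtain Y where Y: "cadj Y = Y" "Y ** Q = Q ** Y" "Z = \<phi> Y" by (auto simp: comm_sp_def)
    have "cadj Z = Z" by (simp add: Y \<phi>_def cadj_mult matrix_mul_assoc)
    moreover have "Z ** P = P ** Z"
    proof -
      have "Z ** P = W ** Y ** (cadj W ** P)" by (simp add: Y \<phi>_def matrix_mul_assoc)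
      also have "\<dots> = W ** (Y ** Q) ** cadj W" by (simp add: WP matrix_mul_assoc)
      also have "\<dots> = (W ** Q) ** Y ** cadj W" by (simp add: Y(2) matrix_mul_assoc)
      also have "\<dots> = P ** Z" by (simp add: PW[symmetric] Y \<phi>_def matrix_mul_assoc)
      finally show ?thesis .
    qed
    ultimately show "Z \<in> comm_sp P" by (simp add: comm_sp_def)
  qed
  have "dim (comm_sp Q) = dim (\<phi> ` comm_sp Q)" using eucl.dim_image_eq[OF lin inj] by simp
  also have "\<dots> \<le> dim (comm_sp P)" by (rule dim_subset[OF img])
  finally show ?thesis .
qed



theorem mainTheorem14:
  fixes k :: nat and T :: "complex^'n^'n \<Rightarrow> complex^'n^'n" and A :: "complex^'n^'n"
  assumes "1 \<le> k" and "k < CARD('n)"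
    and add: "\<forall>X\<in>herm. \<forall>Y\<in>herm. T (X + Y) = T X + T Y"
    and hom: "\<forall>X\<in>herm. \<forall>c::real. T (c *\<^sub>R X) = c *\<^sub>R T X"
    and bij: "bij_betw T herm herm"
    and par: "\<forall>X\<in>herm. \<forall>Y\<in>herm. wk_parallel k X Y \<longrightarrow> wk_parallel k (T X) (T Y)"
    and "A \<in> herm"
    and "\<exists>Q. attain_set k A = {Q}"
  shows "\<forall>X\<in>herm. T X = A \<longrightarrow>
           ((\<exists>P. attain_set k X = {P}) \<or>
            (CARD('n) = 2 * k \<and> (\<exists>P. attain_set k X = {P, mat 1 - P})))"
proof (intro ballI impI)
  fix X assume Xh: "X \<in> herm" and TX: "T X = A"
  note k1 = \<open>1 \<le> k\<close> and kn = \<open>k < CARD('n)\<close>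
  have kle: "k \<le> CARD('n)" using kn by simp
  obtain Q where attA: "attain_set k A = {Q}" using \<open>\<exists>Q. attain_set k A = {Q}\<close> by blast
  have Qr: "Q \<in> rank_proj k" using attA by (auto simp: attain_set_def)
  have Th: "T Y \<in> herm" if "Y \<in> herm" for Y using bij that by (auto simp: bij_betw_def)
  have Tinj: "inj_on T herm" using bij by (auto simp: bij_betw_def)
  have F1: "T Y ** Q = Q ** T Y" if Yh: "Y \<in> herm" and PX: "P \<in> attain_set k X" and PY: "P \<in> attain_set k Y" for Y P
  proof -
    have "wk_parallel k X Y"
      using common_par[OF kle _ _ PX PY] Xh Yh by (simp add: herm_iff)
    then have "wk_parallel k A (T Y)" using par Xh Yh TX by blast
    then obtain R where "R \<in> attain_set k A" "R \<in> attain_set k (T Y)" using par_common[OF kle] by blast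
    then have "Q \<in> attain_set k (T Y)" using attA by auto
    moreover have "cadj (T Y) = T Y" using Th[OF Yh] by (simp add: herm_iff)
    ultimately show ?thesis using attain_comm[OF kle] by blast
  qed
  have F2: "T Z \<in> comm_sp Q" if PX: "P \<in> attain_set k X" and Z: "Z \<in> comm_sp P" for P Z
  proof -
    have Pr: "P \<in> rank_proj k" using PX by (auto simp: attain_set_def)
    have Ph: "P \<in> herm" using Pr by (auto simp: rank_proj_def herm_iff)
    have Zh: "Z \<in> herm" and Zc: "Z ** P = P ** Z" using Z by (auto simp: comm_sp_def herm_iff)
    define c where "c = 2 * norm Z"
    have Y1h: "Z + c *\<^sub>R P \<in> herm" using Zh Ph by (simp add: herm_iff)
    have "P \<in> attain_set k (Z + c *\<^sub>R P)"
      by (rule shift_attain[OF kle _ Zc Pr]) (use Zh in \<open>auto simp: herm_iff c_def\<close>)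
    then have c1: "T (Z + c *\<^sub>R P) ** Q = Q ** T (Z + c *\<^sub>R P)" using F1[OF Y1h PX] by blast
    have "P \<in> attain_set k (0 + 1 *\<^sub>R P)"
      by (rule shift_attain[OF kle _ _ Pr]) auto
    then have "T P ** Q = Q ** T P" using F1[OF Ph PX] by simp
    have decomp: "T Z = T (Z + c *\<^sub>R P) - c *\<^sub>R T P"
    proof -
      have "T ((Z + c *\<^sub>R P) + (-c) *\<^sub>R P) = T (Z + c *\<^sub>R P) + T ((-c) *\<^sub>R P)"
        using add Y1h Ph herm_subspace by (metis subspace_scale)
      also have "T ((-c) *\<^sub>R P) = (-c) *\<^sub>R T P" using hom Ph by blast
      finally show ?thesis by (simp add: algebra_simps)
    qed
    have "T Z ** Q = Q ** T Z"
      unfolding decomp using c1 \<open>T P ** Q = Q ** T P\<close>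
      by (simp add: mult_diff_left mult_diff_right mmult_scaleR_left mmult_scaleR_right)
    then show ?thesis using Th[OF Zh] by (simp add: comm_sp_def herm_iff)
  qed
  define hs where "hs M = (1/2::real) *\<^sub>R (M + cadj M)" for M :: "complex^'n^'n"
  have hsh: "hs M \<in> herm" for M by (simp add: hs_def herm_iff add.commute)
  have hsid: "hs M = M" if "M \<in> herm" for M using that
    by (simp add: hs_def herm_iff scaleR_add_right[symmetric] del: scaleR_add_right)
  define T' where "T' M = T (hs M)" for M
  have T'lin: "linear T'"
  proof (rule linearI)
    fix x y :: "complex^'n^'n"
    have "hs (x + y) = hs x + hs y" by (simp add: hs_def algebra_simps)
    then show "T' (x + y) = T' x + T' y" using add hsh by (simp add: T'_def)
  next
    fix r :: real and x :: "complex^'n^'n"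
    have "hs (r *\<^sub>R x) = r *\<^sub>R hs x" by (simp add: hs_def algebra_simps)
    then show "T' (r *\<^sub>R x) = r *\<^sub>R T' x" using hom hsh by (simp add: T'_def)
  qed
  have T'eq: "T' M = T M" if "M \<in> herm" for M using hsid[OF that] by (simp add: T'_def)
  have L: "P2 = P1 \<or> (P2 = mat 1 - P1 \<and> CARD('n) = 2 * k)"
    if P1: "P1 \<in> attain_set k X" and P2: "P2 \<in> attain_set k X" for P1 P2
  proof (rule ccontr)
    assume nc: "\<not> (P2 = P1 \<or> (P2 = mat 1 - P1 \<and> CARD('n) = 2 * k))"
    have P1r: "P1 \<in> rank_proj k" and P2r: "P2 \<in> rank_proj k" using P1 P2 by (auto simp: attain_set_def)
    have "\<not> (\<forall>Y. cadj Y = Y \<longrightarrow> Y ** P2 = P2 ** Y \<longrightarrow> Y ** P1 = P1 ** Y)"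
    proof
      assume "\<forall>Y. cadj Y = Y \<longrightarrow> Y ** P2 = P2 ** Y \<longrightarrow> Y ** P1 = P1 ** Y"
      from comm_forces[OF k1 kn P1r P2r this] nc show False by auto
    qed
    then obtain Y where Y: "Y \<in> comm_sp P2" "Y \<notin> comm_sp P1" by (auto simp: comm_sp_def)
    define S where "S = comm_sp P1"
    have Ssub: "subspace S" unfolding S_def by (rule subspace_comm_sp)
    have Sh: "S \<subseteq> herm" by (auto simp: S_def comm_sp_def herm_iff)
    have Yh: "Y \<in> herm" using Y by (auto simp: comm_sp_def herm_iff)
    have "span S = S" using Ssub span_eq_iff by blast
    moreover have "Y \<notin> S" using Y(2) S_def by simp
    ultimately have YnS: "Y \<notin> span S" by metis
    have insh: "span (insert Y S) \<subseteq> herm"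
      by (rule span_minimal) (use Sh Yh herm_subspace in auto)
    have img: "T' ` insert Y S \<subseteq> comm_sp Q"
    proof
      fix Z assume "Z \<in> T' ` insert Y S"
      then obtain M where M: "M \<in> insert Y S" "Z = T' M" by blast
      show "Z \<in> comm_sp Q"
      proof (cases "M = Y")
        case True
        then show ?thesis using M F2[OF P2 Y(1)] T'eq[OF Yh] by simp
      next
        case False
        then have "M \<in> comm_sp P1" using M by (simp add: S_def)
        moreover then have "M \<in> herm" by (auto simp: comm_sp_def herm_iff)
        ultimately show ?thesis using M F2[OF P1] T'eq by simp
      qed
    qed
    have img2: "T' ` span (insert Y S) \<subseteq> comm_sp Q"
    proof -
      have "span (T' ` insert Y S) \<subseteq> comm_sp Q" by (rule span_minimal[OF img subspace_comm_sp])
      then show ?thesis using span_linear_image[OF T'lin, of "insert Y S"] by simp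
    qed
    have inj: "inj_on T' (span (span (insert Y S)))"
    proof -
      have "inj_on T' herm" using Tinj T'eq by (simp add: inj_on_def)
      then show ?thesis using insh by (simp add: span_span inj_on_subset)
    qed
    have "dim (span (insert Y S)) = dim (T' ` span (insert Y S))"
      using eucl.dim_image_eq[OF T'lin inj] by simp
    also have "\<dots> \<le> dim (comm_sp Q)" using img2 by (rule dim_subset)
    also have "\<dots> \<le> dim (comm_sp P1)" by (rule dim_comm_le[OF P1r Qr kle])
    finally have "dim (insert Y S) \<le> dim S" by (simp add: S_def dim_span)
    moreover have "dim (insert Y S) = dim S + 1" using YnS eucl.dim_insert[of Y S] by simp
    ultimately show False by simp
  qed
  obtain P1 where P1: "P1 \<in> attain_set k X" using attain_exists[OF kle] by blast
  show "(\<exists>P. attain_set k X = {P}) \<or> (CARD('n) = 2 * k \<and> (\<exists>P. attain_set k X = {P, mat 1 - P}))"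
  proof (cases "attain_set k X = {P1}")
    case True then show ?thesis by blast
  next
    case False
    then obtain P2 where P2: "P2 \<in> attain_set k X" "P2 \<noteq> P1" using P1 by blast
    then have e: "P2 = mat 1 - P1" "CARD('n) = 2 * k" using L[OF P1 P2(1)] by auto
    have "attain_set k X = {P1, mat 1 - P1}"
    proof
      show "attain_set k X \<subseteq> {P1, mat 1 - P1}" using L[OF P1] by blast
      show "{P1, mat 1 - P1} \<subseteq> attain_set k X" using P1 P2 e by auto
    qed
    then show ?thesis using e by blast
  qed
qed


end
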